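(* Let $I\subseteq S=\Bbbk[x_1,\dots,x_n]$ be a squarefree monomial ideal which is Gotzmann in $S$. Then its squarefree lexification $L$ is Gotzmann in $S$.
   Context: Let $\Bbbk$ be a field, $S=\Bbbk[x_1,\dots,x_n]$, $R=S/(x_1^2,\dots,x_n^2)$, $\mathbf m=(x_1,\dots,x_n)$. All ideals are homogeneous. A monomial ideal is squarefree if its minimal monomial generators are squarefree. For a homogeneous ideal $I$, $I_d$ is its degree-$d$ component and $|I_d|$ its $\Bbbk$-dimension; $\mathbf m_1 I_d$ denotes the span of $\{x_j f: f\in I_d,\ 1\le j\le n\}$ (the degree $d+1$ component of the ideal generated by $I_d$). An ideal $I$ of $S$ (resp. $R$) is Gotzmann if for every $d$ and every homogeneous ideal $J$ of $S$ (resp. $R$) with $|J_d|=|I_d|$ one has $|\mathbf m_1 I_d|\le|\mathbf m_1 J_d|$. A monomial ideal of $R$ is lex if each degree component is spanned by an initial segment, in the lexicographic order with $x_1>\dots>x_n$, of the nonzero (i.e. squarefree) monomials of that degree. A squarefree monomial ideal $L\subseteq S$ is squarefree lex if $LR$ is lex in $R$. The squarefree lexification of a squarefree monomial ideal $I\subseteq S$ is the (unique) squarefree lex ideal $L\subseteq S$ having the same Hilbert function as $I$ in $S$ (equivalently, $LR$ is the lex ideal of $R$ with the same Hilbert function as $IR$). *)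

theory Defs
  imports Main HOL.Vector_Spaces "HOL-Library.Poly_Mapping"
begin

text \<open>Monomials in the variables x_0, x_1, ... are exponent vectors (nat =>0 nat);
  the paper's variable x_(i+1) is our variable index i.\<close>

type_synonym 'k poly = "(nat \<Rightarrow>\<^sub>0 nat) \<Rightarrow>\<^sub>0 'k"

definition mdeg :: "(nat \<Rightarrow>\<^sub>0 nat) \<Rightarrow> nat" where
  "mdeg m = (\<Sum>i\<in>Poly_Mapping.keys m. Poly_Mapping.lookup m i)"

definition in_vars :: "nat \<Rightarrow> (nat \<Rightarrow>\<^sub>0 nat) \<Rightarrow> bool" where
  "in_vars n m \<longleftrightarrow> Poly_Mapping.keys m \<subseteq> {..<n}"

definition polyS :: "nat \<Rightarrow> ('k::field) poly set" where
  "polyS n = {p. \<forall>m\<in>Poly_Mapping.keys p. in_vars n m}"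

definition pscale :: "'k::field \<Rightarrow> 'k poly \<Rightarrow> 'k poly" where
  "pscale c p = Poly_Mapping.map (\<lambda>a. c * a) p"

definition kdim :: "('k::field) poly set \<Rightarrow> nat" where
  "kdim V = vector_space.dim pscale V"

definition kspan :: "('k::field) poly set \<Rightarrow> 'k poly set" where
  "kspan V = module.span pscale V"

definition monom :: "(nat \<Rightarrow>\<^sub>0 nat) \<Rightarrow> ('k::field) poly" where
  "monom m = Poly_Mapping.single m 1"

definition var :: "nat \<Rightarrow> ('k::field) poly" where
  "var i = monom (Poly_Mapping.single i 1)"

definition hcomp :: "nat \<Rightarrow> ('k::field) poly \<Rightarrow> 'k poly" where
  "hcomp d p = Poly_Mapping.mapp (\<lambda>m a. if mdeg m = d then a else 0) p"

definition is_ideal :: "nat \<Rightarrow> ('k::field) poly set \<Rightarrow> bool" where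
  "is_ideal n J \<longleftrightarrow> J \<subseteq> polyS n \<and> 0 \<in> J \<and>
     (\<forall>p\<in>J. \<forall>q\<in>J. p + q \<in> J) \<and> (\<forall>p\<in>J. \<forall>q\<in>polyS n. q * p \<in> J)"

definition homogeneous_ideal :: "nat \<Rightarrow> ('k::field) poly set \<Rightarrow> bool" where
  "homogeneous_ideal n J \<longleftrightarrow> is_ideal n J \<and> (\<forall>p\<in>J. \<forall>d. hcomp d p \<in> J)"

definition ideal_gen :: "nat \<Rightarrow> ('k::field) poly set \<Rightarrow> 'k poly set" where
  "ideal_gen n G = \<Inter>{J. is_ideal n J \<and> G \<subseteq> J}"

definition degcomp :: "('k::field) poly set \<Rightarrow> nat \<Rightarrow> 'k poly set" where
  "degcomp I d = {p\<in>I. \<forall>m\<in>Poly_Mapping.keys p. mdeg m = d}"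

definition m1 :: "nat \<Rightarrow> ('k::field) poly set \<Rightarrow> 'k poly set" where
  "m1 n V = kspan {var j * f | j f. j < n \<and> f \<in> V}"

definition gotzmann :: "nat \<Rightarrow> ('k::field) poly set \<Rightarrow> bool" where
  "gotzmann n I \<longleftrightarrow> (\<forall>d. \<forall>J::'k poly set. homogeneous_ideal n J \<and> kdim (degcomp J d) = kdim (degcomp I d)
       \<longrightarrow> kdim (m1 n (degcomp I d)) \<le> kdim (m1 n (degcomp J d)))"

definition squarefree_mon :: "(nat \<Rightarrow>\<^sub>0 nat) \<Rightarrow> bool" where
  "squarefree_mon m \<longleftrightarrow> (\<forall>i. Poly_Mapping.lookup m i \<le> 1)"

definition squarefree_monomial_ideal :: "nat \<Rightarrow> ('k::field) poly set \<Rightarrow> bool" where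
  "squarefree_monomial_ideal n I \<longleftrightarrow>
     (\<exists>G. (\<forall>m\<in>G. in_vars n m \<and> squarefree_mon m) \<and> I = ideal_gen n (monom ` G))"

text \<open>lex order with x_1 > ... > x_n (our indices 0 < 1 < ...): u >_lex v\<close>
definition lex_gt :: "(nat \<Rightarrow>\<^sub>0 nat) \<Rightarrow> (nat \<Rightarrow>\<^sub>0 nat) \<Rightarrow> bool" where
  "lex_gt u v \<longleftrightarrow> (\<exists>i. Poly_Mapping.lookup v i < Poly_Mapping.lookup u i \<and> (\<forall>j<i. Poly_Mapping.lookup u j = Poly_Mapping.lookup v j))"

text \<open>L is squarefree lex: L is a squarefree monomial ideal and LR is lex in R, i.e.
  in each degree d the squarefree monomials (the nonzero monomials of R) lying in L
  form an initial lex segment of all squarefree monomials of degree d.\<close>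
definition squarefree_lex :: "nat \<Rightarrow> ('k::field) poly set \<Rightarrow> bool" where
  "squarefree_lex n L \<longleftrightarrow> squarefree_monomial_ideal n L \<and>
     (\<forall>u v. in_vars n u \<and> squarefree_mon u \<and> in_vars n v \<and> squarefree_mon v \<and>
        mdeg u = mdeg v \<and> lex_gt u v \<and> (monom v :: 'k poly) \<in> L \<longrightarrow> monom u \<in> L)"

end

theory Submission
  imports Defs
begin


lemma pscale_eq: "pscale c p = Poly_Mapping.single 0 c * p"
  unfolding pscale_def by (simp add: mult_map_scale_conv_mult[symmetric])

interpretation ps: vector_space "pscale :: 'k::field \<Rightarrow> 'k poly \<Rightarrow> 'k poly"
  apply unfold_locales
     apply (simp_all add: pscale_eq algebra_simps single_add mult_single flip: mult.assoc)
  done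

lemma kdim_eq: "kdim V = ps.dim V" unfolding kdim_def ..
lemma kspan_eq: "kspan V = ps.span V" unfolding kspan_def ..

definition PM :: "(nat \<Rightarrow>\<^sub>0 nat) set \<Rightarrow> ('k::field) poly set" where
  "PM M = {p. Poly_Mapping.keys p \<subseteq> M}"

lemma pscale_monom: "pscale c (monom m) = Poly_Mapping.single m c"
  by (simp add: pscale_eq monom_def mult_single)

lemma poly_expand: "(p::'k::field poly) = (\<Sum>m\<in>Poly_Mapping.keys p. pscale (Poly_Mapping.lookup p m) (monom m))"
proof (rule poly_mapping_eqI)
  fix k
  have "Poly_Mapping.lookup (\<Sum>m\<in>Poly_Mapping.keys p. pscale (Poly_Mapping.lookup p m) (monom m)) k
      = (\<Sum>m\<in>Poly_Mapping.keys p. if m = k then Poly_Mapping.lookup p m else 0)"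
    unfolding lookup_sum pscale_monom by (intro sum.cong refl) (simp add: lookup_single when_def)
  also have "\<dots> = Poly_Mapping.lookup p k" by (simp add: sum.delta' in_keys_iff)
  finally show "Poly_Mapping.lookup p k = Poly_Mapping.lookup (\<Sum>m\<in>Poly_Mapping.keys p. pscale (Poly_Mapping.lookup p m) (monom m)) k" ..
qed

lemma lookup_pscale: "Poly_Mapping.lookup (pscale c p) m = c * Poly_Mapping.lookup p m"
  by (simp add: pscale_def map.rep_eq when_def)

lemma keys_pscale: "Poly_Mapping.keys (pscale c p) \<subseteq> Poly_Mapping.keys p"
  by (auto simp: in_keys_iff lookup_pscale)

lemma subspace_PM: "ps.subspace (PM M :: 'k::field poly set)"
  unfolding ps.subspace_def PM_def
proof (intro conjI ballI allI)
  fix x y :: "'k poly" assume "x \<in> {p. Poly_Mapping.keys p \<subseteq> M}" "y \<in> {p. Poly_Mapping.keys p \<subseteq> M}"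
  thus "x + y \<in> {p. Poly_Mapping.keys p \<subseteq> M}" using keys_add[of x y] by auto
next
  fix c and x :: "'k poly" assume "x \<in> {p. Poly_Mapping.keys p \<subseteq> M}"
  thus "pscale c x \<in> {p. Poly_Mapping.keys p \<subseteq> M}" using keys_pscale[of c x] by auto
qed simp

lemma PM_span: "(PM M :: 'k::field poly set) = ps.span (monom ` M)"
proof
  show "PM M \<subseteq> ps.span (monom ` M)"
  proof
    fix p assume "p \<in> PM M"
    hence "Poly_Mapping.keys p \<subseteq> M" by (simp add: PM_def)
    hence "(\<Sum>m\<in>Poly_Mapping.keys p. pscale (Poly_Mapping.lookup p m) (monom m)) \<in> ps.span (monom ` M)"
      by (intro ps.span_sum ps.span_scale ps.span_base) auto
    thus "p \<in> ps.span (monom ` M)" using poly_expand[of p] by simp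
  qed
  show "ps.span (monom ` M) \<subseteq> PM M"
    by (rule ps.span_minimal) (auto simp: subspace_PM[unfolded PM_def] PM_def monom_def)
qed

lemma inj_monom: "inj (monom :: _ \<Rightarrow> 'k::field poly)"
  by (rule injI) (metis monom_def lookup_single_eq lookup_single_not_eq zero_neq_one)

lemma indep_monom: assumes "finite M" shows "ps.independent (monom ` M :: 'k::field poly set)"
proof (rule ps.independent_if_scalars_zero)
  show "finite (monom ` M :: 'k poly set)" using assms by simp
  fix f :: "'k poly \<Rightarrow> 'k" and x :: "'k poly"
  assume s: "(\<Sum>x\<in>monom ` M. pscale (f x) x) = 0" and x: "x \<in> monom ` M"
  then obtain m where m: "m \<in> M" "x = monom m" by auto
  have "(\<Sum>x\<in>monom ` M. pscale (f x) x) = (\<Sum>m'\<in>M. Poly_Mapping.single m' (f (monom m')))"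
    by (subst sum.reindex) (auto intro: inj_on_subset[OF inj_monom] simp: pscale_monom)
  hence "Poly_Mapping.lookup (\<Sum>m'\<in>M. Poly_Mapping.single m' (f (monom m'))) m = 0" using s by simp
  hence "f (monom m) = 0" using assms m(1)
    by (simp add: lookup_sum lookup_single when_def)
  thus "f x = 0" using m by simp
qed

lemma kdim_PM: assumes "finite M" shows "kdim (PM M :: 'k::field poly set) = card M"
proof -
  have "kdim (PM M :: 'k poly set) = card (monom ` M :: 'k poly set)"
    unfolding kdim_eq PM_span by (rule ps.dim_span_eq_card_independent[OF indep_monom[OF assms]])
  also have "\<dots> = card M" by (rule card_image[OF inj_on_subset[OF inj_monom]]) simp
  finally show ?thesis .
qed



definition MI :: "nat \<Rightarrow> (nat \<Rightarrow>\<^sub>0 nat) set \<Rightarrow> ('k::field) poly set" where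
  "MI n G = {p \<in> polyS n. \<forall>m\<in>Poly_Mapping.keys p. \<exists>g\<in>G. \<exists>h. m = g + h}"

lemma in_vars_add: "in_vars n a \<Longrightarrow> in_vars n b \<Longrightarrow> in_vars n (a + b)"
  unfolding in_vars_def using keys_add[of a b] by auto

lemma keys_add_nat: "Poly_Mapping.keys ((a::'x \<Rightarrow>\<^sub>0 nat) + b) = Poly_Mapping.keys a \<union> Poly_Mapping.keys b"
  by (auto simp: in_keys_iff lookup_add)

lemma in_vars_addD: "in_vars n (a + b) \<Longrightarrow> in_vars n b"
  unfolding in_vars_def keys_add_nat by blast

lemma MI_ideal: "is_ideal n (MI n G :: 'k::field poly set)"
  unfolding is_ideal_def
proof (intro conjI ballI)
  show "MI n G \<subseteq> polyS n" by (auto simp: MI_def)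
  show "0 \<in> (MI n G :: 'k poly set)" by (simp add: MI_def polyS_def)
  fix p q :: "'k poly"
  assume p: "p \<in> MI n G"
  { assume q: "q \<in> MI n G"
    show "p + q \<in> MI n G" using p q keys_add[of p q]
      by (auto simp: MI_def polyS_def) }
  { assume q: "q \<in> polyS n"
    show "q * p \<in> MI n G"
      unfolding MI_def polyS_def
    proof (intro CollectI conjI ballI)
      fix m assume "m \<in> Poly_Mapping.keys (q * p)"
      then obtain a b where ab: "m = a + b" "a \<in> Poly_Mapping.keys q" "b \<in> Poly_Mapping.keys p"
        using keys_mult[of q p] by blast
      then show "in_vars n m" using p q by (auto simp: MI_def polyS_def intro: in_vars_add)
      from ab p obtain g h where "g \<in> G" "b = g + h" by (auto simp: MI_def)
      then show "\<exists>g\<in>G. \<exists>h. m = g + h" using ab by (metis add.left_commute)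
    qed }
qed

lemma sum_in_ideal: assumes "is_ideal n J" "finite A" "\<And>x. x \<in> A \<Longrightarrow> f x \<in> J" shows "sum f A \<in> J"
  using assms(2,3) by (induction A rule: finite_induct) (use assms(1) in \<open>auto simp: is_ideal_def\<close>)

lemma ideal_gen_MI:
  assumes G: "\<forall>g\<in>G. in_vars n g"
  shows "ideal_gen n (monom ` G) = (MI n G :: 'k::field poly set)"
proof
  have "monom ` G \<subseteq> (MI n G :: 'k poly set)"
    using G by (auto simp: MI_def monom_def polyS_def) (metis add_0_right)
  thus "ideal_gen n (monom ` G) \<subseteq> (MI n G :: 'k poly set)"
    unfolding ideal_gen_def using MI_ideal by blast
  show "MI n G \<subseteq> (ideal_gen n (monom ` G) :: 'k poly set)"
    unfolding ideal_gen_def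
  proof (rule subsetI, rule InterI)
    fix p :: "'k poly" and J :: "'k poly set" assume p: "p \<in> MI n G" and "J \<in> {J. is_ideal n J \<and> monom ` G \<subseteq> J}"
    hence J: "is_ideal n J" "monom ` G \<subseteq> J" by auto
    have "(\<Sum>m\<in>Poly_Mapping.keys p. pscale (Poly_Mapping.lookup p m) (monom m)) \<in> J"
    proof (rule sum_in_ideal[OF J(1)], simp)
      fix m assume m: "m \<in> Poly_Mapping.keys p"
      then obtain g h where gh: "g \<in> G" "m = g + h" using p by (auto simp: MI_def)
      have "in_vars n m" using m p by (auto simp: MI_def polyS_def)
      hence hv: "in_vars n h" using gh by (metis add.commute in_vars_addD)
      have "pscale (Poly_Mapping.lookup p m) (monom m) = Poly_Mapping.single h (Poly_Mapping.lookup p m) * monom g"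
        unfolding pscale_monom by (simp add: monom_def mult_single gh add.commute)
      moreover have "Poly_Mapping.single h (Poly_Mapping.lookup p m) \<in> polyS n"
        using hv by (simp add: polyS_def)
      moreover have "monom g \<in> J" using J gh by auto
      ultimately show "pscale (Poly_Mapping.lookup p m) (monom m) \<in> J"
        using J(1) by (simp add: is_ideal_def)
    qed
    thus "p \<in> J" using poly_expand[of p] by simp
  qed
qed



abbreviation "lk \<equiv> Poly_Mapping.lookup"
abbreviation "ks \<equiv> Poly_Mapping.keys"

lemma mdeg_sum: "finite S \<Longrightarrow> ks m \<subseteq> S \<Longrightarrow> mdeg m = (\<Sum>i\<in>S. lk m i)"
  unfolding mdeg_def by (rule sum.mono_neutral_left) (auto simp: in_keys_iff)

lemma mdeg_add: "mdeg (a + b) = mdeg a + mdeg b"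
proof -
  let ?S = "ks a \<union> ks b"
  have "mdeg (a+b) = (\<Sum>i\<in>?S. lk (a+b) i)" by (rule mdeg_sum) (auto simp: keys_add_nat)
  also have "\<dots> = (\<Sum>i\<in>?S. lk a i) + (\<Sum>i\<in>?S. lk b i)" by (simp add: lookup_add sum.distrib)
  also have "\<dots> = mdeg a + mdeg b" by (simp add: mdeg_sum[symmetric])
  finally show ?thesis .
qed

lemma mdeg_single: "mdeg (Poly_Mapping.single j (k::nat)) = k"
  by (simp add: mdeg_def)

lemma mdeg_zero[simp]: "mdeg 0 = 0" by (simp add: mdeg_def)

lemma lookup_le_mdeg: "lk m i \<le> mdeg m"
proof (cases "i \<in> ks m")
  case True thus ?thesis unfolding mdeg_def by (intro member_le_sum) auto
qed (simp add: in_keys_iff)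

definition Mon :: "nat \<Rightarrow> nat \<Rightarrow> (nat \<Rightarrow>\<^sub>0 nat) set" where
  "Mon n d = {m. in_vars n m \<and> mdeg m = d}"

lemma finite_Mon: "finite (Mon n d)"
proof -
  let ?F = "{f. \<forall>x. (x \<in> {..<n} \<longrightarrow> f x \<in> {..d}) \<and> (x \<notin> {..<n} \<longrightarrow> f x = (0::nat))}"
  have "lk ` Mon n d \<subseteq> ?F"
  proof clarify
    fix m x assume m: "m \<in> Mon n d"
    show "(x \<in> {..<n} \<longrightarrow> lk m x \<in> {..d}) \<and> (x \<notin> {..<n} \<longrightarrow> lk m x = 0)"
      using m lookup_le_mdeg[of m x] by (auto simp: Mon_def in_vars_def in_keys_iff)
  qed
  moreover have "finite ?F" by (rule finite_set_of_finite_funs) auto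
  ultimately have "finite (lk ` Mon n d)" by (rule finite_subset)
  moreover have "inj_on lk (Mon n d)" by (rule inj_onI) simp
  ultimately show ?thesis using finite_imageD by blast
qed

definition Md :: "nat \<Rightarrow> (nat \<Rightarrow>\<^sub>0 nat) set \<Rightarrow> nat \<Rightarrow> (nat \<Rightarrow>\<^sub>0 nat) set" where
  "Md n G d = {m \<in> Mon n d. \<exists>g\<in>G. \<exists>h. m = g + h}"

lemma degcomp_MI: "degcomp (MI n G :: 'k::field poly set) d = PM (Md n G d)"
  unfolding degcomp_def MI_def PM_def Md_def Mon_def polyS_def by blast

definition shiftM :: "nat \<Rightarrow> (nat \<Rightarrow>\<^sub>0 nat) set \<Rightarrow> (nat \<Rightarrow>\<^sub>0 nat) set" where
  "shiftM n M = {Poly_Mapping.single j 1 + m | j m. j < n \<and> m \<in> M}"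

lemma m1_PM: "m1 n (PM M :: 'k::field poly set) = PM (shiftM n M)"
proof
  show "m1 n (PM M :: 'k poly set) \<subseteq> PM (shiftM n M)"
    unfolding m1_def kspan_eq
  proof (rule ps.span_minimal[OF _ subspace_PM], clarify)
    fix j and f :: "'k poly" assume j: "j < n" and f: "f \<in> PM M"
    have "ks (var j * f) \<subseteq> {a + b | a b. a \<in> ks (var j :: 'k poly) \<and> b \<in> ks f}" by (rule keys_mult)
    thus "var j * f \<in> PM (shiftM n M)" using j f
      unfolding PM_def shiftM_def var_def monom_def by (simp add: subset_iff) blast
  qed
  have "PM (shiftM n M) = ps.span (monom ` shiftM n M :: 'k poly set)" by (rule PM_span)
  also have "\<dots> \<subseteq> m1 n (PM M)"
    unfolding m1_def kspan_eq
  proof (rule ps.span_mono, rule subsetI)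
    fix y assume "y \<in> (monom ` shiftM n M :: 'k poly set)"
    then obtain j m where jm: "j < n" "m \<in> M" "y = monom (Poly_Mapping.single j 1 + m)"
      by (auto simp: shiftM_def)
    have "(monom (Poly_Mapping.single j 1 + m) :: 'k poly) = var j * monom m"
      by (simp add: var_def monom_def mult_single)
    moreover have "(monom m :: 'k poly) \<in> PM M" using jm by (simp add: PM_def monom_def)
    ultimately show "y \<in> {var j * f |j f. j < n \<and> f \<in> PM M}"
      using jm by blast
  qed
  finally show "PM (shiftM n M) \<subseteq> (m1 n (PM M) :: 'k poly set)" .
qed

lemma shiftM_sub: "M \<subseteq> Mon n d \<Longrightarrow> shiftM n M \<subseteq> Mon n (Suc d)"
  by (auto simp: shiftM_def Mon_def mdeg_add mdeg_single in_vars_def keys_add_nat subset_iff)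

lemma finite_shiftM: "M \<subseteq> Mon n d \<Longrightarrow> finite (shiftM n M)"
  by (rule finite_subset[OF shiftM_sub finite_Mon])



definition fam :: "nat \<Rightarrow> (nat \<Rightarrow>\<^sub>0 nat) set \<Rightarrow> nat set set" where
  "fam n G = {F. F \<subseteq> {..<n} \<and> (\<exists>g\<in>G. ks g \<subseteq> F)}"

definition layer :: "nat set set \<Rightarrow> nat \<Rightarrow> nat set set" where
  "layer \<F> k = {F\<in>\<F>. card F = k}"

definition ush :: "nat \<Rightarrow> nat \<Rightarrow> nat set set \<Rightarrow> nat set set" where
  "ush n k \<A> = {B. B \<subseteq> {..<n} \<and> card B = Suc k \<and> (\<exists>A\<in>\<A>. A \<subseteq> B)}"

definition sqm :: "nat set \<Rightarrow> (nat \<Rightarrow>\<^sub>0 nat)" where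
  "sqm F = Abs_poly_mapping (\<lambda>i. if i \<in> F then 1 else 0)"

lemma lookup_sqm: "finite F \<Longrightarrow> lk (sqm F) i = (if i \<in> F then 1 else 0)"
  unfolding sqm_def by (subst lookup_Abs_poly_mapping) (auto elim: finite_subset[rotated])

lemma keys_sqm: "finite F \<Longrightarrow> ks (sqm F) = F"
  by (auto simp: in_keys_iff lookup_sqm split: if_splits)

lemma mdeg_sqm: "finite F \<Longrightarrow> mdeg (sqm F) = card F"
  by (simp add: mdeg_def keys_sqm lookup_sqm)

lemma sqm_inj: "finite A \<Longrightarrow> finite B \<Longrightarrow> sqm A = sqm B \<Longrightarrow> A = B"
  by (metis keys_sqm)

lemma squarefree_eq_sqm: assumes "\<forall>i. lk m i \<le> 1" shows "m = sqm (ks m)"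
proof (rule poly_mapping_eqI)
  fix k show "lk m k = lk (sqm (ks m)) k"
    using assms[rule_format, of k] by (cases "lk m k") (auto simp: lookup_sqm in_keys_iff)
qed

lemma card_keys_le_mdeg: "card (ks m) \<le> mdeg m"
  unfolding mdeg_def
  using sum_mono[of "ks m" "\<lambda>_. 1::nat" "lk m"] by (auto simp: in_keys_iff)

lemma mdeg_eq_card_sqf: assumes "mdeg m = card (ks m)" shows "\<forall>i. lk m i \<le> 1"
proof (rule ccontr)
  assume "\<not> (\<forall>i. lk m i \<le> 1)"
  then obtain i where i: "lk m i > 1" by (auto simp: not_le)
  hence ik: "i \<in> ks m" by (auto simp: in_keys_iff)
  have "card (ks m) = (\<Sum>j\<in>ks m. (1::nat))" by simp
  also have "\<dots> < (\<Sum>j\<in>ks m. lk m j)"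
    by (rule sum_strict_mono_ex1) (use i ik in \<open>auto simp: in_keys_iff\<close>)
  finally show False using assms by (simp add: mdeg_def)
qed

lemma divides_iff_keys:
  assumes "squarefree_mon g"
  shows "(\<exists>h. m = g + h) \<longleftrightarrow> ks g \<subseteq> ks m"
proof
  assume "\<exists>h. m = g + h" thus "ks g \<subseteq> ks m" by (auto simp: keys_add_nat)
next
  assume sub: "ks g \<subseteq> ks m"
  have "m = g + (m - g)"
  proof (rule poly_mapping_eqI)
    fix k
    have "lk g k \<le> 1" using assms by (simp add: squarefree_mon_def)
    moreover have "lk g k \<noteq> 0 \<Longrightarrow> lk m k \<noteq> 0" using sub by (metis in_keys_iff subsetD)
    ultimately have "lk g k \<le> lk m k" by linarith
    thus "lk m k = lk (g + (m - g)) k" by (simp add: lookup_add lookup_minus)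
  qed
  thus "\<exists>h. m = g + h" ..
qed

lemma Md_fam:
  assumes G: "\<forall>g\<in>G. in_vars n g \<and> squarefree_mon g"
  shows "Md n G d = {m\<in>Mon n d. ks m \<in> fam n G}"
  unfolding Md_def fam_def Mon_def in_vars_def using G by (auto simp: divides_iff_keys)

lemma fam_up: "F \<in> fam n G \<Longrightarrow> F \<subseteq> B \<Longrightarrow> B \<subseteq> {..<n} \<Longrightarrow> B \<in> fam n G"
  unfolding fam_def by blast

lemma fam_finite: "finite (fam n G)"
  by (rule finite_subset[of _ "Pow {..<n}"]) (auto simp: fam_def)

lemma fam_sub: "F \<in> fam n G \<Longrightarrow> F \<subseteq> {..<n}"
  by (simp add: fam_def)

lemma ush_sub: "ush n d (layer (fam n G) d) \<subseteq> layer (fam n G) (Suc d)"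
  unfolding ush_def layer_def using fam_up by blast

lemma lookup_single_nat: "lk (Poly_Mapping.single j (1::nat)) i = (if i = j then 1 else 0)"
  by (simp add: lookup_single when_def)

lemma shift_Md:
  assumes G: "\<forall>g\<in>G. in_vars n g \<and> squarefree_mon g"
  shows "shiftM n (Md n G d) = Md n G (Suc d) - sqm ` (layer (fam n G) (Suc d) - ush n d (layer (fam n G) d))"
    (is "?L = ?R")
proof
  show "?L \<subseteq> ?R"
  proof
    fix x assume xL: "x \<in> ?L"
    then obtain j m where jm: "j < n" "m \<in> Md n G d" "x = Poly_Mapping.single j 1 + m"
      by (auto simp: shiftM_def)
    have mM: "m \<in> Mon n d" "ks m \<in> fam n G" using jm(2) by (auto simp: Md_fam[OF G])
    have "Md n G d \<subseteq> Mon n d" by (auto simp: Md_def)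
    hence xM: "x \<in> Mon n (Suc d)" using shiftM_sub xL by blast
    have kx: "ks x = insert j (ks m)" using jm by (simp add: keys_add_nat)
    have xn0: "ks x \<subseteq> {..<n}" using xM by (simp add: Mon_def in_vars_def)
    have "ks m \<subseteq> ks x" using kx by blast
    hence "ks x \<in> fam n G" by (rule fam_up[OF mM(2) _ xn0])
    hence "x \<in> Md n G (Suc d)" using xM by (simp add: Md_fam[OF G])
    moreover have "x \<notin> sqm ` (layer (fam n G) (Suc d) - ush n d (layer (fam n G) d))"
    proof
      assume "x \<in> sqm ` (layer (fam n G) (Suc d) - ush n d (layer (fam n G) d))"
      then obtain B where B: "B \<in> layer (fam n G) (Suc d)" "B \<notin> ush n d (layer (fam n G) d)" "x = sqm B"
        by auto
      have "B \<in> fam n G" using B(1) by (simp add: layer_def)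
      have fB: "finite B" by (rule finite_subset[OF fam_sub[OF \<open>B \<in> fam n G\<close>]]) simp
      have "lk x j = 1 + lk m j" using jm by (simp add: lookup_add)
      moreover have "lk x j \<le> 1" using B(3) fB by (simp add: lookup_sqm)
      ultimately have "j \<notin> ks m" by (simp add: in_keys_iff)
      have kB: "ks x = B" using B(3) fB by (simp add: keys_sqm)
      have "card (ks m) = d"
      proof -
        have "card B = Suc d" using B(1) by (simp add: layer_def)
        thus ?thesis using kB kx \<open>j \<notin> ks m\<close> using card_insert_disjoint[of "ks m" j] by simp
      qed
      hence "ks m \<in> layer (fam n G) d" using mM by (simp add: layer_def)
      moreover have "B \<subseteq> {..<n}" "card B = Suc d" using B(1) fam_sub by (auto simp: layer_def)
      ultimately have "B \<in> ush n d (layer (fam n G) d)" using kB kx unfolding ush_def by blast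
      thus False using B(2) by simp
    qed
    ultimately show "x \<in> ?R" by simp
  qed
  show "?R \<subseteq> ?L"
  proof
    fix x assume xR: "x \<in> ?R"
    hence xM: "x \<in> Mon n (Suc d)" "ks x \<in> fam n G" by (auto simp: Md_fam[OF G])
    have xn: "ks x \<subseteq> {..<n}" using xM by (simp add: Mon_def in_vars_def)
    show "x \<in> ?L"
    proof (cases "\<forall>i. lk x i \<le> 1")
      case True
      have fk: "finite (ks x)" by simp
      have xs: "x = sqm (ks x)" using True by (rule squarefree_eq_sqm)
      have cx: "card (ks x) = Suc d" using xM(1) mdeg_sqm[OF fk] xs by (simp add: Mon_def)
      hence "ks x \<in> layer (fam n G) (Suc d)" using xM by (simp add: layer_def)
      hence "ks x \<in> ush n d (layer (fam n G) d)" using xR xs by blast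
      then obtain A where A: "A \<in> layer (fam n G) d" "A \<subseteq> ks x" unfolding ush_def by blast
      have fA: "finite A" by (rule finite_subset[OF A(2)]) simp
      have cA: "card A = d" using A(1) by (simp add: layer_def)
      obtain j where j: "ks x = insert j A" "j \<notin> A"
      proof -
        have "card (ks x - A) = 1" using cx cA A(2) fA by (simp add: card_Diff_subset)
        then obtain j where "ks x - A = {j}" by (auto simp: card_Suc_eq)
        thus thesis using that A(2) by blast
      qed
      have "sqm (insert j A) = Poly_Mapping.single j 1 + sqm A"
        by (rule poly_mapping_eqI) (use j(2) fA in \<open>auto simp: lookup_add lookup_sqm lookup_single when_def\<close>)
      hence "x = Poly_Mapping.single j 1 + sqm A" using xs j(1) by simp
      moreover have "sqm A \<in> Md n G d"
        using A fA xn j by (auto simp: Md_fam[OF G] Mon_def in_vars_def keys_sqm mdeg_sqm layer_def)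
      moreover have "j < n" using j xn by auto
      ultimately show ?thesis unfolding shiftM_def by blast
    next
      case False
      then obtain j where j: "lk x j > 1" by (auto simp: not_le)
      define m where "m = x - Poly_Mapping.single j 1"
      have xm: "x = Poly_Mapping.single j 1 + m"
        by (rule poly_mapping_eqI) (use j in \<open>auto simp: m_def lookup_add lookup_minus lookup_single when_def\<close>)
      have km: "ks m = ks x"
        using j by (auto simp: m_def in_keys_iff lookup_minus lookup_single when_def)
      have "mdeg x = Suc (mdeg m)" using xm by (simp add: mdeg_add mdeg_single)
      hence "m \<in> Md n G d" using xM km by (auto simp: Md_fam[OF G] Mon_def in_vars_def)
      moreover have "j < n" using j xn by (metis gr_implies_not0 in_keys_iff lessThan_iff subsetD)
      ultimately show ?thesis unfolding shiftM_def using xm by blast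
    qed
  qed
qed

lemma card_shift_Md:
  assumes G: "\<forall>g\<in>G. in_vars n g \<and> squarefree_mon g"
  shows "card (shiftM n (Md n G d)) + card (layer (fam n G) (Suc d)) =
         card (Md n G (Suc d)) + card (ush n d (layer (fam n G) d))"
proof -
  let ?X = "layer (fam n G) (Suc d) - ush n d (layer (fam n G) d)"
  have fX: "finite ?X" using fam_finite by (simp add: layer_def)
  have fin: "\<And>F. F \<in> ?X \<Longrightarrow> finite F" by (rule finite_subset[OF fam_sub, of _ n G]) (auto simp: layer_def)
  have inj: "inj_on sqm ?X" by (rule inj_onI) (metis fin sqm_inj)
  have sub: "sqm ` ?X \<subseteq> Md n G (Suc d)"
  proof
    fix x assume "x \<in> sqm ` ?X"
    then obtain B where "B \<in> ?X" "x = sqm B" by auto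
    thus "x \<in> Md n G (Suc d)" using fin[of B] fam_sub[of B n G]
      by (auto simp: Md_fam[OF G] Mon_def in_vars_def keys_sqm mdeg_sqm layer_def)
  qed
  have fM: "finite (Md n G (Suc d))" using finite_Mon by (rule finite_subset[rotated]) (auto simp: Md_def)
  have "card (shiftM n (Md n G d)) = card (Md n G (Suc d)) - card ?X"
    unfolding shift_Md[OF G] using sub fM by (simp add: card_Diff_subset card_image[OF inj, symmetric] finite_subset)
  moreover have "card ?X = card (layer (fam n G) (Suc d)) - card (ush n d (layer (fam n G) d))"
  proof -
    have fU: "finite (ush n d (layer (fam n G) d))"
      by (rule finite_subset[OF ush_sub]) (simp add: layer_def fam_finite)
    show ?thesis by (rule card_Diff_subset[OF fU ush_sub])
  qed
  moreover have "card ?X \<le> card (Md n G (Suc d))" using sub fM card_mono card_image[OF inj] by metis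
  moreover have "card (ush n d (layer (fam n G) d)) \<le> card (layer (fam n G) (Suc d))"
    using ush_sub fam_finite by (intro card_mono) (auto simp: layer_def)
  ultimately show ?thesis by linarith
qed



definition Ex :: "nat \<Rightarrow> nat set \<Rightarrow> (nat \<Rightarrow>\<^sub>0 nat) set" where
  "Ex d F = {m. ks m = F \<and> mdeg m = d}"

lemma Ex_finite: assumes "finite F" shows "finite (Ex d F)"
proof -
  obtain N where "F \<subseteq> {..<N}" using assms by (auto simp: finite_nat_set_iff_bounded)
  hence "Ex d F \<subseteq> Mon N d" by (auto simp: Ex_def Mon_def in_vars_def)
  thus ?thesis by (rule finite_subset) (rule finite_Mon)
qed

lemma Ex_le:
  assumes fF: "finite F" and fF': "finite F'" and c: "card F = card F'"
  shows "card (Ex d F) \<le> card (Ex d F')"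
proof -
  obtain \<sigma> where \<sigma>: "bij_betw \<sigma> F' F" using finite_same_card_bij[OF fF' fF] c by auto
  define \<phi> where "\<phi> (m::nat \<Rightarrow>\<^sub>0 nat) = (Abs_poly_mapping (\<lambda>j. if j \<in> F' then lk m (\<sigma> j) else 0) :: nat \<Rightarrow>\<^sub>0 nat)" for m
  have lk\<phi>: "lk (\<phi> m) j = (if j \<in> F' then lk m (\<sigma> j) else 0)" for m j
    unfolding \<phi>_def by (subst lookup_Abs_poly_mapping) (auto intro: finite_subset[OF _ fF'])
  have sF: "\<sigma> j \<in> F" if "j \<in> F'" for j using \<sigma> that by (auto simp: bij_betw_def)
  have maps: "\<phi> m \<in> Ex d F'" if m: "m \<in> Ex d F" for m
  proof -
    have km: "ks m = F" "mdeg m = d" using m by (auto simp: Ex_def)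
    have k: "ks (\<phi> m) = F'"
      using sF km(1) by (auto simp: in_keys_iff lk\<phi> split: if_splits)
    have "mdeg (\<phi> m) = (\<Sum>j\<in>F'. lk m (\<sigma> j))"
      using k fF' by (simp add: mdeg_def lk\<phi>)
    also have "\<dots> = (\<Sum>i\<in>F. lk m i)" by (rule sum.reindex_bij_betw[OF \<sigma>])
    also have "\<dots> = d" using km by (simp add: mdeg_def)
    finally show ?thesis using k by (simp add: Ex_def)
  qed
  have inj: "inj_on \<phi> (Ex d F)"
  proof (rule inj_onI)
    fix a b assume a: "a \<in> Ex d F" and b: "b \<in> Ex d F" and e: "\<phi> a = \<phi> b"
    show "a = b"
    proof (rule poly_mapping_eqI)
      fix i show "lk a i = lk b i"
      proof (cases "i \<in> F")
        case True
        then obtain j where "j \<in> F'" "i = \<sigma> j" using \<sigma> by (auto simp: bij_betw_def)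
        thus ?thesis using arg_cong[OF e, of "\<lambda>p. lk p j"] by (simp add: lk\<phi>)
      next
        case False thus ?thesis using a b by (auto simp: Ex_def in_keys_iff)
      qed
    qed
  qed
  show ?thesis by (rule card_inj_on_le[OF inj _ Ex_finite[OF fF']]) (use maps in blast)
qed

definition ce :: "nat \<Rightarrow> nat \<Rightarrow> nat" where "ce d k = card (Ex d {..<k})"

lemma card_Ex: "finite F \<Longrightarrow> card (Ex d F) = ce d (card F)"
  unfolding ce_def by (rule antisym; rule Ex_le) auto

lemma Ex_top: assumes "finite F" shows "Ex (card F) F = {sqm F}"
proof
  show "{sqm F} \<subseteq> Ex (card F) F" using assms by (simp add: Ex_def keys_sqm mdeg_sqm)
  show "Ex (card F) F \<subseteq> {sqm F}"
  proof
    fix m assume "m \<in> Ex (card F) F"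
    hence m: "ks m = F" "mdeg m = card F" by (auto simp: Ex_def)
    hence "\<forall>i. lk m i \<le> 1" by (intro mdeg_eq_card_sqf) simp
    thus "m \<in> {sqm F}" using squarefree_eq_sqm m by auto
  qed
qed

lemma ce_diag: "ce d d = 1"
  using card_Ex[of "{..<d}" d] Ex_top[of "{..<d}"] by simp

lemma ce_big: assumes "d < k" shows "ce d k = 0"
proof -
  have "Ex d {..<k} = {}"
  proof (rule ccontr)
    assume "Ex d {..<k} \<noteq> {}"
    then obtain m where "ks m = {..<k}" "mdeg m = d" by (auto simp: Ex_def)
    thus False using card_keys_le_mdeg[of m] assms by simp
  qed
  thus ?thesis by (simp add: ce_def)
qed

lemma Md_Ex:
  assumes G: "\<forall>g\<in>G. in_vars n g \<and> squarefree_mon g"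
  shows "Md n G d = (\<Union>F\<in>fam n G. Ex d F)"
  unfolding Md_fam[OF G] using fam_sub by (auto simp: Ex_def Mon_def in_vars_def)

lemma card_Md:
  assumes G: "\<forall>g\<in>G. in_vars n g \<and> squarefree_mon g"
  shows "card (Md n G d) = card (layer (fam n G) d) + (\<Sum>k<d. card (layer (fam n G) k) * ce d k)"
proof -
  have finF: "\<And>F. F \<in> fam n G \<Longrightarrow> finite F" by (rule finite_subset[OF fam_sub]) auto
  have "card (Md n G d) = (\<Sum>F\<in>fam n G. card (Ex d F))"
    unfolding Md_Ex[OF G]
  proof (rule card_UN_disjoint)
    show "finite (fam n G)" by (rule fam_finite)
    show "\<forall>F\<in>fam n G. finite (Ex d F)" using Ex_finite finF by blast
  qed (auto simp: Ex_def)
  also have "\<dots> = (\<Sum>F\<in>fam n G. ce d (card F))" by (intro sum.cong refl card_Ex finF)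
  also have "\<dots> = (\<Sum>k\<in>{..n+d}. (\<Sum>F\<in>{F \<in> fam n G. card F = k}. ce d (card F)))"
  proof (rule sum.group[symmetric, OF fam_finite])
    show "card ` fam n G \<subseteq> {..n+d}"
    proof
      fix k assume "k \<in> card ` fam n G"
      then obtain F where "F \<in> fam n G" "k = card F" by auto
      moreover have "card F \<le> n" using card_mono[OF _ fam_sub[OF \<open>F \<in> fam n G\<close>]] by simp
      ultimately show "k \<in> {..n+d}" by simp
    qed
  qed simp
  also have "\<dots> = (\<Sum>k\<in>{..n+d}. card (layer (fam n G) k) * ce d k)"
    by (intro sum.cong refl) (simp add: layer_def)
  also have "\<dots> = (\<Sum>k\<in>{..d}. card (layer (fam n G) k) * ce d k)"
    by (rule sum.mono_neutral_right) (auto simp: ce_big)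
  also have "\<dots> = card (layer (fam n G) d) + (\<Sum>k<d. card (layer (fam n G) k) * ce d k)"
    by (simp add: lessThan_Suc_atMost[symmetric] ce_diag)
  finally show ?thesis .
qed

lemma fvec_eq:
  assumes G: "\<forall>g\<in>G. in_vars n g \<and> squarefree_mon g"
    and H: "\<forall>g\<in>H. in_vars n g \<and> squarefree_mon g"
    and eq: "\<forall>d. card (Md n G d) = card (Md n H d)"
  shows "card (layer (fam n G) k) = card (layer (fam n H) k)"
proof (induction k rule: less_induct)
  case (less k)
  have "(\<Sum>j<k. card (layer (fam n G) j) * ce k j) = (\<Sum>j<k. card (layer (fam n H) j) * ce k j)"
    using less by (intro sum.cong refl) simp
  thus ?case using eq card_Md[OF G, of k] card_Md[OF H, of k] by simp
qed



definition wt :: "nat \<Rightarrow> nat set \<Rightarrow> nat" where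
  "wt n A = (\<Sum>i\<in>A. 2 ^ (n - i))"

lemma geo: "u < n \<Longrightarrow> (\<Sum>v\<in>{u<..<n}. (2::nat) ^ (n - v)) + 2 = 2 ^ (n - u)"
proof (induction n)
  case 0 thus ?case by simp
next
  case (Suc n)
  show ?case
  proof (cases "u = n")
    case True thus ?thesis by simp
  next
    case False
    hence un: "u < n" using Suc.prems by simp
    have e: "{u<..<Suc n} = insert n {u<..<n}" using un by auto
    have "(\<Sum>v\<in>{u<..<Suc n}. (2::nat) ^ (Suc n - v)) = 2 + (\<Sum>v\<in>{u<..<n}. 2 ^ (Suc n - v))"
      unfolding e by simp
    also have "(\<Sum>v\<in>{u<..<n}. (2::nat) ^ (Suc n - v)) = 2 * (\<Sum>v\<in>{u<..<n}. 2 ^ (n - v))"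
      by (simp add: sum_distrib_left Suc_diff_le less_imp_le flip: power_Suc)
    finally show ?thesis using Suc.IH[OF un] un
      by (simp add: Suc_diff_le less_imp_le)
  qed
qed

lemma wt_gt:
  assumes fX: "finite X" and Y: "Y \<subseteq> {..<n}" and u: "u \<in> X" "u < n" and uv: "\<forall>v\<in>Y. u < v"
  shows "wt n Y < wt n X"
proof -
  have "wt n Y \<le> (\<Sum>v\<in>{u<..<n}. 2 ^ (n - v))"
    unfolding wt_def by (rule sum_mono2) (use Y uv in auto)
  also have "\<dots> < 2 ^ (n - u)" using geo[OF u(2)] by linarith
  also have "\<dots> \<le> wt n X" unfolding wt_def by (rule member_le_sum) (use u fX in auto)
  finally show ?thesis .
qed

lemma wt_split: "finite A \<Longrightarrow> wt n A = wt n (A \<inter> B) + wt n (A - B)"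
  unfolding wt_def by (metis Diff_Diff_Int Diff_subset inf.commute sum.subset_diff)

lemma wt_min:
  assumes A: "A \<subseteq> {..<n}" and B: "B \<subseteq> {..<n}" and ne: "A \<noteq> B"
    and m: "Min ((A - B) \<union> (B - A)) \<in> A"
  shows "wt n B < wt n A"
proof -
  let ?S = "(A - B) \<union> (B - A)"
  have fA: "finite A" and fB: "finite B" using A B finite_subset by auto
  have fS: "finite ?S" using fA fB by simp
  have Sne: "?S \<noteq> {}" using ne by blast
  have mS: "Min ?S \<in> ?S" using Min_in[OF fS Sne] .
  hence mAB: "Min ?S \<in> A - B" using m by blast
  have "wt n (B - A) < wt n (A - B)"
  proof (rule wt_gt)
    show "finite (A - B)" using fA by simp
    show "B - A \<subseteq> {..<n}" using B by blast
    show "Min ?S \<in> A - B" by (rule mAB)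
    show "Min ?S < n" using mAB A by auto
    show "\<forall>v\<in>B - A. Min ?S < v"
    proof
      fix v assume v: "v \<in> B - A"
      hence "Min ?S \<le> v" using fS by (intro Min_le) auto
      moreover have "Min ?S \<noteq> v" using v mAB by auto
      ultimately show "Min ?S < v" by simp
    qed
  qed
  moreover have "wt n A = wt n (A \<inter> B) + wt n (A - B)" by (rule wt_split[OF fA])
  moreover have "wt n B = wt n (B \<inter> A) + wt n (B - A)" by (rule wt_split[OF fB])
  ultimately show ?thesis by (simp add: Int_commute)
qed

lemma wt_lt_min:
  assumes A: "A \<subseteq> {..<n}" and B: "B \<subseteq> {..<n}" and lt: "wt n B < wt n A"
  shows "A \<noteq> B \<and> Min ((A - B) \<union> (B - A)) \<in> A - B"
proof -
  have ne: "A \<noteq> B" using lt by auto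
  let ?S = "(A - B) \<union> (B - A)"
  have fS: "finite ?S" using finite_subset[OF A] finite_subset[OF B] by auto
  have mS: "Min ?S \<in> ?S" using ne fS by (intro Min_in) auto
  have "Min ?S \<notin> B - A"
  proof
    assume "Min ?S \<in> B - A"
    hence "Min ((B - A) \<union> (A - B)) \<in> B" by (simp add: Un_commute)
    hence "wt n A < wt n B" using wt_min[OF B A] ne by metis
    thus False using lt by simp
  qed
  thus ?thesis using ne mS by blast
qed

lemma wt_inj: "A \<subseteq> {..<n} \<Longrightarrow> B \<subseteq> {..<n} \<Longrightarrow> wt n A = wt n B \<Longrightarrow> A = B"
proof (rule ccontr)
  assume A: "A \<subseteq> {..<n}" and B: "B \<subseteq> {..<n}" and e: "wt n A = wt n B" and ne: "A \<noteq> B"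
  let ?S = "(A - B) \<union> (B - A)"
  have fS: "finite ?S" using finite_subset[OF A] finite_subset[OF B] by auto
  have mS: "Min ?S \<in> ?S" using ne fS by (intro Min_in) auto
  show False
  proof (cases "Min ?S \<in> A")
    case True thus False using wt_min[OF A B ne] e by simp
  next
    case False
    hence "Min ((B - A) \<union> (A - B)) \<in> B" using mS by (simp add: Un_commute)
    thus False using wt_min[OF B A] ne e by (metis less_irrefl)
  qed
qed



definition cmp :: "nat set \<Rightarrow> nat set \<Rightarrow> nat set \<Rightarrow> nat set" where
  "cmp U V A = (if V \<subseteq> A \<and> U \<inter> A = {} then (A - V) \<union> U else A)"

definition Cfam :: "nat set \<Rightarrow> nat set \<Rightarrow> nat set set \<Rightarrow> nat set set" where
  "Cfam U V \<A> = {A\<in>\<A>. cmp U V A \<in> \<A>} \<union> cmp U V ` {A\<in>\<A>. cmp U V A \<notin> \<A>}"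

definition compressed :: "nat set \<Rightarrow> nat set \<Rightarrow> nat set set \<Rightarrow> bool" where
  "compressed U V \<A> \<longleftrightarrow> (\<forall>A\<in>\<A>. cmp U V A \<in> \<A>)"

definition Kf :: "nat \<Rightarrow> nat \<Rightarrow> nat set set" where
  "Kf n k = {A. A \<subseteq> {..<n} \<and> card A = k}"

lemma finite_Kf: "finite (Kf n k)"
  by (rule finite_subset[of _ "Pow {..<n}"]) (auto simp: Kf_def)

lemma cmp_act: "cmp U V A \<noteq> A \<Longrightarrow> V \<subseteq> A \<and> U \<inter> A = {} \<and> cmp U V A = (A - V) \<union> U"
  unfolding cmp_def by (auto split: if_splits)

lemma cmp_inv: "cmp U V A \<noteq> A \<Longrightarrow> A = (cmp U V A - U) \<union> V"
  using cmp_act[of U V A] by auto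

lemma card_cmp_gen:
  assumes "finite A" "finite U" "finite V" "card U = card V" "V \<subseteq> A" "U \<inter> A = {}"
  shows "card ((A - V) \<union> U) = card A"
proof -
  have "card ((A - V) \<union> U) = card (A - V) + card U"
    using assms by (intro card_Un_disjoint) auto
  also have "card (A - V) = card A - card V" using assms by (simp add: card_Diff_subset)
  finally show ?thesis using assms card_mono[of A V] by simp
qed

lemma cmp_Kf:
  assumes A: "A \<in> Kf n k" and U: "U \<subseteq> {..<n}" and V: "V \<subseteq> {..<n}" and c: "card U = card V"
  shows "cmp U V A \<in> Kf n k"
proof (cases "V \<subseteq> A \<and> U \<inter> A = {}")
  case True
  have f: "finite A" "finite U" "finite V"
    using A U V by (auto simp: Kf_def intro: finite_subset)
  show ?thesis using True A U card_cmp_gen[OF f c] by (auto simp: cmp_def Kf_def)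
next
  case False thus ?thesis using A by (auto simp: cmp_def)
qed

lemma Cfam_sub:
  assumes "\<A> \<subseteq> Kf n k" "U \<subseteq> {..<n}" "V \<subseteq> {..<n}" "card U = card V"
  shows "Cfam U V \<A> \<subseteq> Kf n k"
  using assms cmp_Kf unfolding Cfam_def by blast

lemma card_Cfam:
  assumes fin: "finite \<A>"
  shows "card (Cfam U V \<A>) = card \<A>"
proof -
  let ?P = "{A\<in>\<A>. cmp U V A \<in> \<A>}" and ?Q = "{A\<in>\<A>. cmp U V A \<notin> \<A>}"
  have inj: "inj_on (cmp U V) ?Q"
  proof (rule inj_onI)
    fix a b assume a: "a \<in> ?Q" and b: "b \<in> ?Q" and e: "cmp U V a = cmp U V b"
    have "cmp U V a \<noteq> a" "cmp U V b \<noteq> b" using a b by auto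
    thus "a = b" using cmp_inv e by metis
  qed
  have "card (Cfam U V \<A>) = card ?P + card (cmp U V ` ?Q)"
    unfolding Cfam_def by (rule card_Un_disjoint) (use fin in auto)
  also have "\<dots> = card ?P + card ?Q" using card_image[OF inj] by simp
  also have "\<dots> = card (?P \<union> ?Q)" by (rule card_Un_disjoint[symmetric]) (use fin in auto)
  also have "?P \<union> ?Q = \<A>" by blast
  finally show ?thesis .
qed

lemma wt_cmp:
  assumes A: "A \<subseteq> {..<n}" and U: "U \<subseteq> {..<n}" and V: "V \<subseteq> {..<n}"
    and u: "u \<in> U" and uv: "\<forall>v\<in>V. u < v" and act: "cmp U V A \<noteq> A"
  shows "wt n A < wt n (cmp U V A)"
proof -
  have a: "V \<subseteq> A" "U \<inter> A = {}" "cmp U V A = (A - V) \<union> U" using cmp_act[OF act] by auto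
  have fA: "finite A" and fU: "finite U" using A U by (auto intro: finite_subset)
  have "wt n V < wt n U" by (rule wt_gt[OF fU V u _ uv]) (use u U in auto)
  moreover have "wt n ((A - V) \<union> U) = wt n (A - V) + wt n U"
    unfolding wt_def using fA fU a by (intro sum.union_disjoint) auto
  moreover have "wt n A = wt n (A - V) + wt n V"
    unfolding wt_def using fA a by (metis sum.subset_diff add.commute)
  ultimately show ?thesis using a by simp
qed

lemma W_Cfam:
  assumes fin: "finite \<A>" and sub: "\<A> \<subseteq> Kf n k"
    and U: "U \<subseteq> {..<n}" and V: "V \<subseteq> {..<n}" and u: "u \<in> U" and uv: "\<forall>v\<in>V. u < v"
    and nc: "\<not> compressed U V \<A>"
  shows "(\<Sum>A\<in>\<A>. wt n A) < (\<Sum>A\<in>Cfam U V \<A>. wt n A)"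
proof -
  let ?P = "{A\<in>\<A>. cmp U V A \<in> \<A>}" and ?Q = "{A\<in>\<A>. cmp U V A \<notin> \<A>}"
  have inj: "inj_on (cmp U V) ?Q"
  proof (rule inj_onI)
    fix a b assume a: "a \<in> ?Q" and b: "b \<in> ?Q" and e: "cmp U V a = cmp U V b"
    have "cmp U V a \<noteq> a" "cmp U V b \<noteq> b" using a b by auto
    thus "a = b" using cmp_inv e by metis
  qed
  have Qne: "?Q \<noteq> {}" using nc by (auto simp: compressed_def)
  have fQ: "finite ?Q" using fin by simp
  have s1: "(\<Sum>A\<in>?P \<union> ?Q. wt n A) = (\<Sum>A\<in>?P. wt n A) + (\<Sum>A\<in>?Q. wt n A)"
    by (rule sum.union_disjoint) (use fin in auto)
  have s2: "?P \<union> ?Q = \<A>" by blast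
  have "(\<Sum>A\<in>\<A>. wt n A) = (\<Sum>A\<in>?P. wt n A) + (\<Sum>A\<in>?Q. wt n A)"
    using s1 unfolding s2 .
  also have "(\<Sum>A\<in>?Q. wt n A) < (\<Sum>A\<in>?Q. wt n (cmp U V A))"
  proof (rule sum_strict_mono[OF fQ Qne])
    fix A assume "A \<in> ?Q"
    hence "A \<subseteq> {..<n}" "cmp U V A \<noteq> A" using sub by (auto simp: Kf_def)
    thus "wt n A < wt n (cmp U V A)" using wt_cmp[OF _ U V u uv] by blast
  qed
  also have "(\<Sum>A\<in>?Q. wt n (cmp U V A)) = (\<Sum>A\<in>cmp U V ` ?Q. wt n A)"
    using sum.reindex[OF inj, of "wt n"] by (simp add: comp_def)
  also have "(\<Sum>A\<in>?P. wt n A) + (\<Sum>A\<in>cmp U V ` ?Q. wt n A) = (\<Sum>A\<in>Cfam U V \<A>. wt n A)"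
    unfolding Cfam_def by (rule sum.union_disjoint[symmetric]) (use fin in auto)
  finally show ?thesis by simp
qed



lemma insert_of_card:
  assumes "A' \<subseteq> B" "finite B" "card B = Suc (card A')"
  obtains x where "x \<notin> A'" "B = insert x A'"
proof -
  have fA: "finite A'" using assms finite_subset by blast
  have "card (B - A') = 1" using assms fA by (simp add: card_Diff_subset)
  then obtain x where "B - A' = {x}" by (auto simp: card_Suc_eq)
  thus thesis using that assms(1) by blast
qed

lemma ush_Cfam:
  assumes sub: "\<A> \<subseteq> Kf n k" and U: "U \<subseteq> {..<n}" and V: "V \<subseteq> {..<n}"
    and UV: "U \<inter> V = {}" and c: "card U = card V" and Vne: "V \<noteq> {}"
    and H: "\<forall>x\<in>V. \<exists>u\<in>U. compressed (U - {u}) (V - {x}) \<A>"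
  shows "ush n k (Cfam U V \<A>) \<subseteq> Cfam U V (ush n k \<A>)"
proof
  fix B assume "B \<in> ush n k (Cfam U V \<A>)"
  then obtain A' where B: "B \<subseteq> {..<n}" "card B = Suc k" and A': "A' \<in> Cfam U V \<A>" "A' \<subseteq> B"
    by (auto simp: ush_def)
  have fU: "finite U" and fV: "finite V" using U V by (auto intro: finite_subset)
  have fB: "finite B" using B by (auto intro: finite_subset)
  have Une: "U \<noteq> {}" using c Vne fV by auto
  let ?c = "cmp U V"
  let ?U = "ush n k \<A>"
  have inU: "D \<in> ?U" if "D \<subseteq> {..<n}" "card D = Suc k" "A \<in> \<A>" "A \<subseteq> D" for D A
    using that by (auto simp: ush_def)
  have cB_card: "?c D \<subseteq> {..<n} \<and> card (?c D) = Suc k" if "D \<subseteq> {..<n}" "card D = Suc k" for D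
    using cmp_Kf[of D n "Suc k" U V] that U V c by (simp add: Kf_def)
  show "B \<in> Cfam U V ?U"
  proof (cases "A' \<in> \<A> \<and> ?c A' \<in> \<A>")
    case True
    have BU: "B \<in> ?U" using True B A' inU by blast
    have "?c B \<in> ?U"
    proof (cases "V \<subseteq> B \<and> U \<inter> B = {}")
      case False thus ?thesis using BU by (auto simp: cmp_def)
    next
      case act: True
      have cB: "?c B = (B - V) \<union> U" using act by (simp add: cmp_def)
      have cBK: "?c B \<subseteq> {..<n}" "card (?c B) = Suc k" using cB_card[OF B] by auto
      show ?thesis
      proof (cases "V \<subseteq> A'")
        case True
        hence "?c A' = (A' - V) \<union> U" using act A'(2) by (auto simp: cmp_def)
        hence "?c A' \<subseteq> ?c B" using cB A'(2) by blast
        thus ?thesis using inU[OF cBK] \<open>A' \<in> \<A> \<and> ?c A' \<in> \<A>\<close> by blast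
      next
        case False
        then obtain x where x: "x \<in> V" "x \<notin> A'" by blast
        have cA': "card A' = k" using True sub by (auto simp: Kf_def)
        obtain y where y: "y \<notin> A'" "B = insert y A'"
          using insert_of_card[OF A'(2) fB] B(2) cA' by metis
        have "x = y" using x act y by blast
        obtain u where u: "u \<in> U" "compressed (U - {u}) (V - {x}) \<A>" using H x by blast
        have "V - {x} \<subseteq> A'" using act y \<open>x = y\<close> by blast
        moreover have "(U - {u}) \<inter> A' = {}" using act A'(2) by blast
        ultimately have "cmp (U - {u}) (V - {x}) A' = (A' - (V - {x})) \<union> (U - {u})"
          by (simp add: cmp_def)
        moreover have "cmp (U - {u}) (V - {x}) A' \<in> \<A>" using u(2) True by (simp add: compressed_def)
        moreover have "(A' - (V - {x})) \<union> (U - {u}) \<subseteq> ?c B" using cB x(2) A'(2) by blast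
        ultimately show ?thesis using inU[OF cBK] by metis
      qed
    qed
    thus ?thesis using BU by (simp add: Cfam_def)
  next
    case False
    then obtain A where A: "A \<in> \<A>" "?c A \<notin> \<A>" "A' = ?c A" using A' by (auto simp: Cfam_def)
    have ne: "?c A \<noteq> A" using A by auto
    have act: "V \<subseteq> A" "U \<inter> A = {}" "A' = (A - V) \<union> U" using cmp_act[OF ne] A(3) by auto
    have AK: "A \<subseteq> {..<n}" "card A = k" using A sub by (auto simp: Kf_def)
    have cA': "card A' = k" using cmp_Kf[of A n k U V] A sub U V c by (auto simp: Kf_def)
    obtain x where x: "x \<notin> A'" "B = insert x A'"
      using insert_of_card[OF A'(2) fB] B(2) cA' by metis
    have UB: "U \<subseteq> B" using act x by blast
    have cBB: "?c B = B" using UB Une by (auto simp: cmp_def)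
    show ?thesis
    proof (cases "x \<in> V")
      case False
      define D where "D = insert x A"
      have xA: "x \<notin> A" using x False act by blast
      have xU: "x \<notin> U" using x act by blast
      have fA: "finite A" using AK by (auto intro: finite_subset)
      have DK: "D \<subseteq> {..<n}" "card D = Suc k" using B x AK xA fA by (auto simp: D_def)
      have DU: "D \<in> ?U" using inU[OF DK A(1)] by (simp add: D_def subset_insertI)
      have cD: "?c D = B"
      proof -
        have "V \<subseteq> D" "U \<inter> D = {}" using act xU by (auto simp: D_def)
        hence "?c D = (D - V) \<union> U" by (simp add: cmp_def)
        thus ?thesis using x act False by (auto simp: D_def)
      qed
      show ?thesis
      proof (cases "?c D \<in> ?U")
        case True
        hence "B \<in> ?U" using cD by simp
        thus ?thesis using cBB by (simp add: Cfam_def)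
      next
        case False
        thus ?thesis using DU cD unfolding Cfam_def by blast
      qed
    next
      case True
      obtain u where u: "u \<in> U" "compressed (U - {u}) (V - {x}) \<A>" using H True by blast
      have "cmp (U - {u}) (V - {x}) A = (A - (V - {x})) \<union> (U - {u})"
        using act by (auto simp: cmp_def)
      moreover have "cmp (U - {u}) (V - {x}) A \<in> \<A>" using u(2) A(1) by (simp add: compressed_def)
      moreover have "(A - (V - {x})) \<union> (U - {u}) \<subseteq> B" using x act by blast
      ultimately have "B \<in> ?U" using inU[OF B] by metis
      thus ?thesis using cBB by (simp add: Cfam_def)
    qed
  qed
qed

lemma card_ush_Cfam:
  assumes sub: "\<A> \<subseteq> Kf n k" and U: "U \<subseteq> {..<n}" and V: "V \<subseteq> {..<n}"
    and UV: "U \<inter> V = {}" and c: "card U = card V" and Vne: "V \<noteq> {}"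
    and H: "\<forall>x\<in>V. \<exists>u\<in>U. compressed (U - {u}) (V - {x}) \<A>"
  shows "card (ush n k (Cfam U V \<A>)) \<le> card (ush n k \<A>)"
proof -
  have f: "finite (ush n k \<A>)" by (rule finite_subset[of _ "Pow {..<n}"]) (auto simp: ush_def)
  have "card (ush n k (Cfam U V \<A>)) \<le> card (Cfam U V (ush n k \<A>))"
    by (rule card_mono[OF _ ush_Cfam[OF assms]]) (simp add: Cfam_def f)
  also have "\<dots> = card (ush n k \<A>)" by (rule card_Cfam[OF f])
  finally show ?thesis .
qed



definition adm :: "nat \<Rightarrow> nat set \<Rightarrow> nat set \<Rightarrow> bool" where
  "adm n U V \<longleftrightarrow> U \<subseteq> {..<n} \<and> V \<subseteq> {..<n} \<and> U \<inter> V = {} \<and> card U = card V \<and> V \<noteq> {} \<and> (\<exists>u\<in>U. \<forall>v\<in>V. u < v)"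

definition downc :: "nat \<Rightarrow> nat \<Rightarrow> nat set set \<Rightarrow> bool" where
  "downc n k \<A> \<longleftrightarrow> (\<forall>B\<in>\<A>. \<forall>A\<in>Kf n k. wt n B < wt n A \<longrightarrow> A \<in> \<A>)"

lemma compressed_all_downc:
  assumes sub: "\<A> \<subseteq> Kf n k" and all: "\<forall>U V. adm n U V \<longrightarrow> compressed U V \<A>"
  shows "downc n k \<A>"
  unfolding downc_def
proof (intro ballI impI)
  fix B A assume B: "B \<in> \<A>" and A: "A \<in> Kf n k" and lt: "wt n B < wt n A"
  have AK: "A \<subseteq> {..<n}" "card A = k" and BK: "B \<subseteq> {..<n}" "card B = k" using A B sub by (auto simp: Kf_def)
  have fA: "finite A" and fB: "finite B" using AK BK by (auto intro: finite_subset)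
  let ?S = "(A - B) \<union> (B - A)"
  have m: "A \<noteq> B" "Min ?S \<in> A - B" using wt_lt_min[OF AK(1) BK(1) lt] by auto
  have fS: "finite ?S" using fA fB by simp
  have cAB: "card (A - B) = card (B - A)"
    using AK BK fA fB by (metis card_Diff_subset_Int finite_Int inf_commute)
  have "adm n (A - B) (B - A)"
    unfolding adm_def
  proof (intro conjI)
    show "A - B \<subseteq> {..<n}" "B - A \<subseteq> {..<n}" "(A - B) \<inter> (B - A) = {}" using AK BK by auto
    show "card (A - B) = card (B - A)" by (rule cAB)
    show "B - A \<noteq> {}"
    proof
      assume "B - A = {}"
      hence "card (A - B) = 0" using cAB by (metis card.empty)
      thus False using m fA by (metis card_0_eq empty_iff finite_Diff)
    qed
    show "\<exists>u\<in>A - B. \<forall>v\<in>B - A. u < v"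
    proof (intro bexI[OF _ m(2)] ballI)
      fix v assume v: "v \<in> B - A"
      hence "Min ?S \<le> v" using fS by (intro Min_le) auto
      moreover have "Min ?S \<noteq> v" using v m by auto
      ultimately show "Min ?S < v" by simp
    qed
  qed
  hence "cmp (A - B) (B - A) B \<in> \<A>" using all B by (simp add: compressed_def)
  moreover have "cmp (A - B) (B - A) B = A" by (auto simp: cmp_def)
  ultimately show "A \<in> \<A>" by simp
qed

lemma downc_sub:
  assumes dA: "downc n k \<A>" and dL: "downc n k \<L>" and sA: "\<A> \<subseteq> Kf n k" and sL: "\<L> \<subseteq> Kf n k"
    and A: "A \<in> \<A>" "A \<notin> \<L>"
  shows "\<L> \<subseteq> \<A>"
proof
  fix B assume B: "B \<in> \<L>"
  have AK: "A \<in> Kf n k" and BK: "B \<in> Kf n k" using A B sA sL by auto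
  have "\<not> wt n B < wt n A" using dL B AK A(2) by (auto simp: downc_def)
  moreover have "wt n A \<noteq> wt n B"
    using wt_inj[of A n B] AK BK A B by (auto simp: Kf_def)
  ultimately have "wt n A < wt n B" by simp
  thus "B \<in> \<A>" using dA A(1) BK by (auto simp: downc_def)
qed

lemma downc_unique:
  assumes dA: "downc n k \<A>" and dL: "downc n k \<L>" and sA: "\<A> \<subseteq> Kf n k" and sL: "\<L> \<subseteq> Kf n k"
    and c: "card \<A> = card \<L>"
  shows "\<A> = \<L>"
proof (rule ccontr)
  have fA: "finite \<A>" by (rule finite_subset[OF sA finite_Kf])
  have fL: "finite \<L>" by (rule finite_subset[OF sL finite_Kf])
  assume "\<A> \<noteq> \<L>"
  then consider A where "A \<in> \<A>" "A \<notin> \<L>" | A where "A \<in> \<L>" "A \<notin> \<A>" by blast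
  thus False
  proof cases
    case 1
    hence ps: "\<L> \<subset> \<A>" using downc_sub[OF dA dL sA sL] by blast
    show False using psubset_card_mono[OF fA ps] c by linarith
  next
    case 2
    hence ps: "\<A> \<subset> \<L>" using downc_sub[OF dL dA sL sA] by blast
    show False using psubset_card_mono[OF fL ps] c by linarith
  qed
qed

lemma cmp_empty: "cmp {} {} A = A" by (simp add: cmp_def)

theorem kk:
  assumes sA: "\<A> \<subseteq> Kf n k" and sL: "\<L> \<subseteq> Kf n k" and dL: "downc n k \<L>" and c: "card \<L> = card \<A>"
  shows "card (ush n k \<L>) \<le> card (ush n k \<A>)"
proof -
  define S where "S = {\<B>. \<B> \<subseteq> Kf n k \<and> card \<B> = card \<A> \<and> card (ush n k \<B>) \<le> card (ush n k \<A>)}"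
  define W where "W \<B> = (\<Sum>B\<in>\<B>. wt n B)" for \<B>
  have fS: "finite S" by (rule finite_subset[of _ "Pow (Kf n k)"]) (auto simp: S_def finite_Kf)
  have AS: "\<A> \<in> S" using sA by (simp add: S_def)
  obtain \<B> where BS: "\<B> \<in> S" and Bmax: "\<And>\<B>'. \<B>' \<in> S \<Longrightarrow> W \<B>' \<le> W \<B>"
  proof -
    have "Max (W ` S) \<in> W ` S" using fS AS by (intro Max_in) auto
    then obtain \<B> where "\<B> \<in> S" "W \<B> = Max (W ` S)" by auto
    thus thesis using that fS by (metis Max_ge finite_imageI imageI)
  qed
  have sB: "\<B> \<subseteq> Kf n k" and cB: "card \<B> = card \<A>" and uB: "card (ush n k \<B>) \<le> card (ush n k \<A>)"
    using BS by (auto simp: S_def)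
  have fB: "finite \<B>" by (rule finite_subset[OF sB finite_Kf])
  have "\<forall>U V. adm n U V \<longrightarrow> compressed U V \<B>"
  proof (rule ccontr)
    assume "\<not> (\<forall>U V. adm n U V \<longrightarrow> compressed U V \<B>)"
    hence ex: "\<exists>j U V. adm n U V \<and> card U = j \<and> \<not> compressed U V \<B>" by blast
    define j0 where "j0 = (LEAST j. \<exists>U V. adm n U V \<and> card U = j \<and> \<not> compressed U V \<B>)"
    obtain U V where UV: "adm n U V" "card U = j0" "\<not> compressed U V \<B>"
      using LeastI_ex[OF ex] unfolding j0_def by blast
    have minimal: "compressed U' V' \<B>" if "adm n U' V'" "card U' < j0" for U' V'
      using not_less_Least[OF that(2)[unfolded j0_def]] that(1) by blast
    have U: "U \<subseteq> {..<n}" and V: "V \<subseteq> {..<n}" and dj: "U \<inter> V = {}" and cUV: "card U = card V"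
      and Vne: "V \<noteq> {}" using UV(1) by (auto simp: adm_def)
    obtain u0 where u0: "u0 \<in> U" "\<forall>v\<in>V. u0 < v" using UV(1) by (auto simp: adm_def)
    have fU: "finite U" and fV: "finite V" using U V by (auto intro: finite_subset)
    have H: "\<forall>x\<in>V. \<exists>u\<in>U. compressed (U - {u}) (V - {x}) \<B>"
    proof
      fix x assume x: "x \<in> V"
      show "\<exists>u\<in>U. compressed (U - {u}) (V - {x}) \<B>"
      proof (cases "card U = 1")
        case True
        hence "U = {u0}" using u0 fU by (metis card_1_singletonE singletonD)
        moreover have "V = {x}" using True cUV x fV by (metis card_1_singletonE singletonD)
        ultimately show ?thesis using u0 by (intro bexI[of _ u0]) (auto simp: compressed_def cmp_empty)
      next
        case False
        hence "card U \<ge> 2" using u0 fU card_0_eq[of U] by (cases "card U") auto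
        then obtain u where u: "u \<in> U" "u \<noteq> u0"
          using u0 by (metis card_le_Suc0_iff_eq fU not_less_eq_eq numeral_2_eq_2)
        have "adm n (U - {u}) (V - {x})"
          unfolding adm_def
        proof (intro conjI)
          show "U - {u} \<subseteq> {..<n}" "V - {x} \<subseteq> {..<n}" "(U - {u}) \<inter> (V - {x}) = {}" using U V dj by auto
          show "card (U - {u}) = card (V - {x})" using u x cUV fU fV by simp
          show "V - {x} \<noteq> {}"
          proof
            assume "V - {x} = {}"
            hence "V = {x}" using x by blast
            thus False using cUV \<open>card U \<ge> 2\<close> by simp
          qed
          show "\<exists>u\<in>U - {u}. \<forall>v\<in>V - {x}. u < v" using u0 u by auto
        qed
        moreover have "card (U - {u}) < j0"
        proof -
          have "card U > 0" using u(1) fU card_gt_0_iff by blast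
          thus ?thesis using u fU UV(2) by simp
        qed
        ultimately show ?thesis using minimal u by blast
      qed
    qed
    let ?B' = "Cfam U V \<B>"
    have "?B' \<in> S"
      unfolding S_def
    proof (intro CollectI conjI)
      show "?B' \<subseteq> Kf n k" by (rule Cfam_sub[OF sB U V cUV])
      show "card ?B' = card \<A>" using card_Cfam[OF fB] cB by simp
      show "card (ush n k ?B') \<le> card (ush n k \<A>)"
        using card_ush_Cfam[OF sB U V dj cUV Vne H] uB by linarith
    qed
    hence "W ?B' \<le> W \<B>" by (rule Bmax)
    moreover have "W \<B> < W ?B'" unfolding W_def by (rule W_Cfam[OF fB sB U V u0 UV(3)])
    ultimately show False by simp
  qed
  hence "downc n k \<B>" by (rule compressed_all_downc[OF sB])
  hence "\<B> = \<L>" using downc_unique[OF _ dL sB sL] cB c by simp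
  thus ?thesis using uB by simp
qed



lemma sqf_ideal_MI:
  assumes "squarefree_monomial_ideal n (I :: 'k::field poly set)"
  obtains G where "\<forall>g\<in>G. in_vars n g \<and> squarefree_mon g" "I = MI n G"
proof -
  obtain G where G: "\<forall>m\<in>G. in_vars n m \<and> squarefree_mon m" "I = ideal_gen n (monom ` G)"
    using assms by (auto simp: squarefree_monomial_ideal_def)
  have "I = MI n G" using G ideal_gen_MI[of G n] by simp
  thus thesis using that G(1) by blast
qed

lemma finite_Md: "finite (Md n G d)"
  by (rule finite_subset[OF _ finite_Mon[of n d]]) (auto simp: Md_def)

lemma kdim_deg: "kdim (degcomp (MI n G :: 'k::field poly set) d) = card (Md n G d)"
  unfolding degcomp_MI by (rule kdim_PM[OF finite_Md])

lemma kdim_m1: "kdim (m1 n (degcomp (MI n G :: 'k::field poly set) d)) = card (shiftM n (Md n G d))"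
  unfolding degcomp_MI m1_PM
  by (rule kdim_PM[OF finite_shiftM[of _ n d]]) (auto simp: Md_def)

lemma monom_in_MI:
  assumes G: "\<forall>g\<in>G. in_vars n g \<and> squarefree_mon g" and fF: "finite F"
  shows "((monom (sqm F) :: 'k::field poly) \<in> MI n G) \<longleftrightarrow> F \<in> fam n G"
proof -
  have "((monom (sqm F) :: 'k poly) \<in> MI n G) \<longleftrightarrow> in_vars n (sqm F) \<and> (\<exists>g\<in>G. \<exists>h. sqm F = g + h)"
    by (simp add: MI_def polyS_def monom_def)
  also have "\<dots> \<longleftrightarrow> F \<subseteq> {..<n} \<and> (\<exists>g\<in>G. ks g \<subseteq> F)"
    using G divides_iff_keys keys_sqm[OF fF] by (simp add: in_vars_def)
  finally show ?thesis by (simp add: fam_def)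
qed

lemma lex_of_wt:
  assumes A: "A \<subseteq> {..<n}" and B: "B \<subseteq> {..<n}" and lt: "wt n B < wt n A"
  shows "lex_gt (sqm A) (sqm B)"
proof -
  have fA: "finite A" and fB: "finite B" using A B by (auto intro: finite_subset)
  let ?S = "(A - B) \<union> (B - A)"
  have m: "Min ?S \<in> A - B" using wt_lt_min[OF A B lt] by auto
  have fS: "finite ?S" using fA fB by simp
  show ?thesis unfolding lex_gt_def
  proof (intro exI[of _ "Min ?S"] conjI allI impI)
    show "lk (sqm B) (Min ?S) < lk (sqm A) (Min ?S)" using m fA fB by (simp add: lookup_sqm)
    fix j assume j: "j < Min ?S"
    have "j \<notin> ?S"
    proof
      assume "j \<in> ?S" hence "Min ?S \<le> j" using fS by (intro Min_le) auto
      thus False using j by simp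
    qed
    thus "lk (sqm A) j = lk (sqm B) j" using fA fB by (auto simp: lookup_sqm)
  qed
qed

lemma sqm_sqf: "finite F \<Longrightarrow> squarefree_mon (sqm F)"
  by (simp add: squarefree_mon_def lookup_sqm)

lemma downc_lex:
  assumes "squarefree_lex n (L :: 'k::field poly set)"
    and G: "\<forall>g\<in>G. in_vars n g \<and> squarefree_mon g" and LG: "L = MI n G"
  shows "downc n d (layer (fam n G) d)"
  unfolding downc_def
proof (intro ballI impI)
  fix B A assume B: "B \<in> layer (fam n G) d" and A: "A \<in> Kf n d" and lt: "wt n B < wt n A"
  have Bn: "B \<subseteq> {..<n}" "card B = d" "B \<in> fam n G" using B fam_sub by (auto simp: layer_def)
  have An: "A \<subseteq> {..<n}" "card A = d" using A by (auto simp: Kf_def)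
  have fA: "finite A" and fB: "finite B" using An Bn by (auto intro: finite_subset)
  have "(monom (sqm B) :: 'k poly) \<in> L" using monom_in_MI[OF G fB, where 'k='k] Bn LG by simp
  moreover have "lex_gt (sqm A) (sqm B)" by (rule lex_of_wt[OF An(1) Bn(1) lt])
  moreover have "in_vars n (sqm A)" "in_vars n (sqm B)" using An Bn fA fB by (auto simp: in_vars_def keys_sqm)
  moreover have "mdeg (sqm A) = mdeg (sqm B)" using An Bn fA fB by (simp add: mdeg_sqm)
  ultimately have "(monom (sqm A) :: 'k poly) \<in> L"
    using assms(1) sqm_sqf[OF fA] sqm_sqf[OF fB] unfolding squarefree_lex_def by blast
  hence "A \<in> fam n G" using monom_in_MI[OF G fA, where 'k='k] LG by simp
  thus "A \<in> layer (fam n G) d" using An by (simp add: layer_def)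
qed

lemma layer_Kf: "layer (fam n G) d \<subseteq> Kf n d"
  using fam_sub by (auto simp: layer_def Kf_def)

theorem lemma3p4:
  fixes n :: nat and I L :: "('k::field) poly set"
  assumes "squarefree_monomial_ideal n I"
    and "gotzmann n I"
    and "squarefree_lex n L"
    and "\<forall>d. kdim (degcomp L d) = kdim (degcomp I d)"
  shows "gotzmann n L"
proof -
  obtain GI where GI: "\<forall>g\<in>GI. in_vars n g \<and> squarefree_mon g" "I = MI n GI"
    using sqf_ideal_MI[OF assms(1)] by blast
  obtain GL where GL: "\<forall>g\<in>GL. in_vars n g \<and> squarefree_mon g" "L = MI n GL"
    using sqf_ideal_MI[of n L] assms(3) by (auto simp: squarefree_lex_def)
  have hil: "card (Md n GL d) = card (Md n GI d)" for d
    using assms(4) GI(2) GL(2) kdim_deg by metis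
  have fv: "card (layer (fam n GL) k) = card (layer (fam n GI) k)" for k
    by (rule fvec_eq[OF GL(1) GI(1)]) (simp add: hil)
  have growth: "kdim (m1 n (degcomp L d)) \<le> kdim (m1 n (degcomp I d))" for d
  proof -
    have kk: "card (ush n d (layer (fam n GL) d)) \<le> card (ush n d (layer (fam n GI) d))"
      by (rule kk[OF layer_Kf layer_Kf downc_lex[OF assms(3) GL] fv])
    have "card (shiftM n (Md n GL d)) \<le> card (shiftM n (Md n GI d))"
      using card_shift_Md[OF GL(1), of d] card_shift_Md[OF GI(1), of d] hil[of "Suc d"] fv[of "Suc d"] kk
      by linarith
    thus ?thesis using GI(2) GL(2) kdim_m1 by metis
  qed
  show ?thesis
    unfolding gotzmann_def
  proof (intro allI impI)
    fix d and J :: "'k poly set"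
    assume J: "homogeneous_ideal n J \<and> kdim (degcomp J d) = kdim (degcomp L d)"
    hence "homogeneous_ideal n J \<and> kdim (degcomp J d) = kdim (degcomp I d)" using assms(4) by simp
    hence "kdim (m1 n (degcomp I d)) \<le> kdim (m1 n (degcomp J d))"
      using assms(2) unfolding gotzmann_def by blast
    thus "kdim (m1 n (degcomp L d)) \<le> kdim (m1 n (degcomp J d))" using growth[of d] by linarith
  qed
qed

end
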